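(* Assume $\mathcal I$ is $\tau$-standard. Then: (a) for every $\underline d\in\mathbb N_0^m$ there is exactly one weakly decreasing sequence $I_1\supseteq\dots\supseteq I_s$ in $\mathcal I$ (with $s\ge0$) such that $\sum_{k=1}^se_{I_k}=\underline d$; (b) for every $I\in\mathcal I$ and $d\in\mathbb N_0$, $\mathrm{LS}^+_{\lambda_I}(d)=\mathrm{LS}^+_{\underline\lambda}(d\,e_I)$, where $\mathrm{LS}^+_{\lambda_I}(d)$ denotes the set of elements of $\mathrm{LS}^+_{\underline\lambda}$ of degree $d e_I$ whose support lies in $\{(\theta,J)\in D(\underline\lambda,\tau):J=I\}$.
   Context: Let $G$ be a connected, simply-connected, simple algebraic group over an algebraically closed field of characteristic zero, $T\subseteq B$, $W$ the Weyl group, $W_\nu$ stabilizers; $W/W_{Q'}$ has the Bruhat order, $\pi_{Q_2}$ denotes projections and $\min_{Q_1},\max_{Q_1}$ minimal/maximal preimages, $\min_B(\theta)$ minimal representatives. Standing data: dominant $\lambda_1,\dots,\lambda_m$, $\underline\lambda=(\lambda_1,\dots,\lambda_m)$, $\lambda=\sum\lambda_i$, $Q=BW_\lambda B$, $\tau\in W/W_Q$. $\mathcal I$ is a set of nonempty subsets of $[m]$ ordered by inclusion, graded of length $m-1$, satisfying ( * ): $\underline J\subseteq I\Rightarrow J\subseteq I$ (with $\underline J=J$ if $J$ is minimal in $\mathcal I$, else $\underline J=\bigcup\{J\setminus K:K\in\mathcal I$ covered by $J\}$); $e_I=\sum_{i\in\underline I}e_i\in\mathbb N_0^m$, $\lambda_I=\sum_{i\in\underline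 I}\lambda_i$, $P_I=BW_{\lambda_I}B$. $\underline W(\underline\lambda,\tau)=\bigsqcup_I\{\theta\in W/W_{P_I}:\theta\le\pi_{P_I}(\tau)\}\times\{I\}$, ordered by the transitive closure of $(\theta,I)\ge(\phi,J)$ iff $I\supseteq J$ and $\max_Q(\theta)\ge\min_Q(\phi)$; a chain is $\tau$-standard if it lifts (same index sets) along $(\theta,I)\mapsto(\pi_{P_I}(\theta),I)$ to a chain in $\{\theta\in W/W_Q:\theta\le\tau\}\times\mathcal I$ (product order). $D(\underline\lambda,\tau)$ (order $\succeq$): elements lying in a lift of some maximal $\tau$-standard chain, $x\succeq y$ iff $x\ge y$ and both lie in a common such lift. $\mathcal I$ is $\tau$-standard if the projection $D(\underline\lambda,\tau)\to\underline W(\underline\lambda,\tau)$ is a poset isomorphism. Bond numbers for covering $(\theta,I)\succ(\phi,J)$: $|\langle\phi(\lambda_I),\beta^\vee\rangle|$ if $I=J$ ($\beta$ the positive root with $s_\beta\min_B(\phi)=\min_B(\theta)$), $1$ if $I\neq J$. For a maximal chain $\mathfrak C:p_r\succ\dots\succ p_0$: $\mathrm{LS}_{\mathfrak C}=\{\sum a_ie_{p_i}:b_{p_i,p_{i-1}}(a_i+\dots+a_r)\in\mathbb Z\ \forall i\in[r],\ \sum a_i\in\mathbb Z\}$; $\mathrm{LS}^+_{\underline\lambda}=\bigcup_{\mathfrak C}(\mathrm{LS}_{\mathfrak C}\cap\mathbb Q^{\mathfrak C}_{\ge0})$; $\deg e_{(\theta,I)}=e_I$ (extended linearly), and $\mathrm{LS}^+_{\underline\lambda}(\underline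 d)$ consists of elements of degree $\underline d$. *)

theory Defs
  imports "HOL-Analysis.Analysis"
begin

section \<open>Root systems, Weyl group, Bruhat order (data of G, T, B)\<close>

definition pairing :: "'a::euclidean_space \<Rightarrow> 'a \<Rightarrow> real" where
  "pairing v \<alpha> = 2 * (v \<bullet> \<alpha>) / (\<alpha> \<bullet> \<alpha>)"

definition sref :: "'a::euclidean_space \<Rightarrow> 'a \<Rightarrow> 'a" where
  "sref \<alpha> v = v - pairing v \<alpha> *\<^sub>R \<alpha>"

definition root_system :: "'a::euclidean_space set \<Rightarrow> bool" where
  "root_system R \<longleftrightarrow> finite R \<and> 0 \<notin> R \<and> span R = UNIV
     \<and> (\<forall>\<alpha>\<in>R. \<forall>\<beta>\<in>R. sref \<alpha> \<beta> \<in> R \<and> pairing \<beta> \<alpha> \<in> \<int>)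
     \<and> (\<forall>\<alpha>\<in>R. \<forall>c. c *\<^sub>R \<alpha> \<in> R \<longrightarrow> c = 1 \<or> c = -1)"

definition irreducible_rs :: "'a::euclidean_space set \<Rightarrow> bool" where
  "irreducible_rs R \<longleftrightarrow> R \<noteq> {} \<and> \<not> (\<exists>A B. A \<union> B = R \<and> A \<noteq> {} \<and> B \<noteq> {}
        \<and> (\<forall>\<alpha>\<in>A. \<forall>\<beta>\<in>B. \<alpha> \<bullet> \<beta> = 0))"

text \<open>A base (set of simple roots) of R; it corresponds to the choice of the Borel B.\<close>
definition is_base :: "'a::euclidean_space set \<Rightarrow> 'a set \<Rightarrow> bool" where
  "is_base R \<Delta> \<longleftrightarrow> \<Delta> \<subseteq> R \<and> independent \<Delta> \<and>
     (\<forall>\<alpha>\<in>R. \<exists>c. \<alpha> = (\<Sum>\<delta>\<in>\<Delta>. c \<delta> *\<^sub>R \<delta>) \<and> (\<forall>\<delta>\<in>\<Delta>. c \<delta> \<in> \<int>)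
        \<and> ((\<forall>\<delta>\<in>\<Delta>. c \<delta> \<ge> 0) \<or> (\<forall>\<delta>\<in>\<Delta>. c \<delta> \<le> 0)))"

definition pos_roots :: "'a::euclidean_space set \<Rightarrow> 'a set \<Rightarrow> 'a set" where
  "pos_roots R \<Delta> = {\<alpha>\<in>R. \<exists>c. \<alpha> = (\<Sum>\<delta>\<in>\<Delta>. c \<delta> *\<^sub>R \<delta>) \<and> (\<forall>\<delta>\<in>\<Delta>. c \<delta> \<in> \<int> \<and> c \<delta> \<ge> 0)}"

inductive_set weyl :: "'a::euclidean_space set \<Rightarrow> ('a \<Rightarrow> 'a) set" for R where
  weyl_id: "id \<in> weyl R"
| weyl_step: "w \<in> weyl R \<Longrightarrow> \<alpha> \<in> R \<Longrightarrow> sref \<alpha> \<circ> w \<in> weyl R"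

definition len :: "'a::euclidean_space set \<Rightarrow> 'a set \<Rightarrow> ('a \<Rightarrow> 'a) \<Rightarrow> nat" where
  "len R \<Delta> w = card {\<alpha>\<in>pos_roots R \<Delta>. w \<alpha> \<notin> pos_roots R \<Delta>}"

definition bruhat_step :: "'a::euclidean_space set \<Rightarrow> 'a set \<Rightarrow> (('a \<Rightarrow> 'a) \<times> ('a \<Rightarrow> 'a)) set" where
  "bruhat_step R \<Delta> = {(w, sref \<beta> \<circ> w) | w \<beta>. w \<in> weyl R \<and> \<beta> \<in> pos_roots R \<Delta>
       \<and> len R \<Delta> w < len R \<Delta> (sref \<beta> \<circ> w)}"

definition bruhat_le :: "'a::euclidean_space set \<Rightarrow> 'a set \<Rightarrow> ('a \<Rightarrow> 'a) \<Rightarrow> ('a \<Rightarrow> 'a) \<Rightarrow> bool" where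
  "bruhat_le R \<Delta> u w \<longleftrightarrow> (u, w) \<in> (bruhat_step R \<Delta>)\<^sup>*"

text \<open>Weights (G simply connected: the full weight lattice) and dominant weights.\<close>
definition weights :: "'a::euclidean_space set \<Rightarrow> 'a set" where
  "weights R = {v. \<forall>\<alpha>\<in>R. pairing v \<alpha> \<in> \<int>}"

definition dominant :: "'a::euclidean_space set \<Rightarrow> 'a set \<Rightarrow> 'a \<Rightarrow> bool" where
  "dominant R \<Delta> v \<longleftrightarrow> v \<in> weights R \<and> (\<forall>\<alpha>\<in>\<Delta>. pairing v \<alpha> \<ge> 0)"

text \<open>Left cosets w W_nu, where W_nu is the stabilizer of nu; W/W_nu.\<close>
definition coset :: "'a::euclidean_space set \<Rightarrow> 'a \<Rightarrow> ('a \<Rightarrow> 'a) \<Rightarrow> ('a \<Rightarrow> 'a) set" where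
  "coset R \<nu> w = {u\<in>weyl R. u \<nu> = w \<nu>}"

definition cosets :: "'a::euclidean_space set \<Rightarrow> 'a \<Rightarrow> ('a \<Rightarrow> 'a) set set" where
  "cosets R \<nu> = coset R \<nu> ` weyl R"

definition minB :: "'a::euclidean_space set \<Rightarrow> 'a set \<Rightarrow> ('a \<Rightarrow> 'a) set \<Rightarrow> ('a \<Rightarrow> 'a)" where
  "minB R \<Delta> \<theta> = (ARG_MIN (len R \<Delta>) w. w \<in> \<theta>)"

definition coset_le :: "'a::euclidean_space set \<Rightarrow> 'a set \<Rightarrow> ('a \<Rightarrow> 'a) set \<Rightarrow> ('a \<Rightarrow> 'a) set \<Rightarrow> bool" where
  "coset_le R \<Delta> \<theta> \<phi> \<longleftrightarrow> bruhat_le R \<Delta> (minB R \<Delta> \<theta>) (minB R \<Delta> \<phi>)"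

definition proj :: "'a::euclidean_space set \<Rightarrow> 'a set \<Rightarrow> 'a \<Rightarrow> ('a \<Rightarrow> 'a) set \<Rightarrow> ('a \<Rightarrow> 'a) set" where
  "proj R \<Delta> \<nu> \<theta> = coset R \<nu> (minB R \<Delta> \<theta>)"

definition min_pre :: "'a::euclidean_space set \<Rightarrow> 'a set \<Rightarrow> 'a \<Rightarrow> 'a \<Rightarrow> ('a \<Rightarrow> 'a) set \<Rightarrow> ('a \<Rightarrow> 'a) set" where
  "min_pre R \<Delta> \<nu>1 \<nu>2 \<theta> = (THE \<eta>. \<eta> \<in> cosets R \<nu>1 \<and> proj R \<Delta> \<nu>2 \<eta> = \<theta> \<and>
      (\<forall>\<eta>'\<in>cosets R \<nu>1. proj R \<Delta> \<nu>2 \<eta>' = \<theta> \<longrightarrow> coset_le R \<Delta> \<eta> \<eta>'))"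

definition max_pre :: "'a::euclidean_space set \<Rightarrow> 'a set \<Rightarrow> 'a \<Rightarrow> 'a \<Rightarrow> ('a \<Rightarrow> 'a) set \<Rightarrow> ('a \<Rightarrow> 'a) set" where
  "max_pre R \<Delta> \<nu>1 \<nu>2 \<theta> = (THE \<eta>. \<eta> \<in> cosets R \<nu>1 \<and> proj R \<Delta> \<nu>2 \<eta> = \<theta> \<and>
      (\<forall>\<eta>'\<in>cosets R \<nu>1. proj R \<Delta> \<nu>2 \<eta>' = \<theta> \<longrightarrow> coset_le R \<Delta> \<eta>' \<eta>))"

definition minimal_in :: "nat set set \<Rightarrow> nat set \<Rightarrow> bool" where
  "minimal_in \<I> J \<longleftrightarrow> \<not> (\<exists>K\<in>\<I>. K \<subset> J)"

definition covers :: "nat set set \<Rightarrow> nat set \<Rightarrow> nat set \<Rightarrow> bool" where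
  "covers \<I> J K \<longleftrightarrow> K \<in> \<I> \<and> K \<subset> J \<and> \<not> (\<exists>L\<in>\<I>. K \<subset> L \<and> L \<subset> J)"

definition ul :: "nat set set \<Rightarrow> nat set \<Rightarrow> nat set" where
  "ul \<I> J = (if minimal_in \<I> J then J else \<Union>{J - K | K. covers \<I> J K})"

definition eI :: "nat set set \<Rightarrow> nat set \<Rightarrow> nat \<Rightarrow> nat" where
  "eI \<I> J = (\<lambda>k. if k \<in> ul \<I> J then 1 else 0)"

definition lamI :: "nat set set \<Rightarrow> (nat \<Rightarrow> 'a::euclidean_space) \<Rightarrow> nat set \<Rightarrow> 'a" where
  "lamI \<I> lam J = (\<Sum>i\<in>ul \<I> J. lam i)"

definition lamsum :: "(nat \<Rightarrow> 'a::euclidean_space) \<Rightarrow> nat \<Rightarrow> 'a" where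
  "lamsum lam m = (\<Sum>i\<in>{1..m}. lam i)"

definition subset_chain :: "nat set set \<Rightarrow> bool" where
  "subset_chain C \<longleftrightarrow> (\<forall>A\<in>C. \<forall>B\<in>C. A \<subseteq> B \<or> B \<subseteq> A)"

text \<open>Nonempty subsets of [m], graded of length m-1: every maximal chain has m elements.\<close>
definition index_system :: "nat \<Rightarrow> nat set set \<Rightarrow> bool" where
  "index_system m \<I> \<longleftrightarrow> (\<forall>I\<in>\<I>. I \<noteq> {} \<and> I \<subseteq> {1..m}) \<and>
     (\<forall>C. C \<subseteq> \<I> \<and> subset_chain C \<and> (\<forall>C'. C \<subseteq> C' \<and> C' \<subseteq> \<I> \<and> subset_chain C' \<longrightarrow> C' = C)
          \<longrightarrow> card C = m)"

definition cond_star :: "nat set set \<Rightarrow> bool" where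
  "cond_star \<I> \<longleftrightarrow> (\<forall>I\<in>\<I>. \<forall>J\<in>\<I>. ul \<I> J \<subseteq> I \<longrightarrow> J \<subseteq> I)"

section \<open>The posets W(lambda,tau) and D(lambda,tau)\<close>

type_synonym 'a elt = "('a \<Rightarrow> 'a) set \<times> nat set"

definition Wl :: "'a::euclidean_space set \<Rightarrow> 'a set \<Rightarrow> (nat \<Rightarrow> 'a) \<Rightarrow> nat \<Rightarrow> nat set set
     \<Rightarrow> ('a \<Rightarrow> 'a) set \<Rightarrow> 'a elt set" where
  "Wl R \<Delta> lam m \<I> \<tau> = {(\<theta>, I). I \<in> \<I> \<and> \<theta> \<in> cosets R (lamI \<I> lam I)
      \<and> coset_le R \<Delta> \<theta> (proj R \<Delta> (lamI \<I> lam I) \<tau>)}"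

definition wl_rel :: "'a::euclidean_space set \<Rightarrow> 'a set \<Rightarrow> (nat \<Rightarrow> 'a) \<Rightarrow> nat \<Rightarrow> nat set set
     \<Rightarrow> ('a \<Rightarrow> 'a) set \<Rightarrow> ('a elt \<times> 'a elt) set" where
  "wl_rel R \<Delta> lam m \<I> \<tau> = {(x, y). x \<in> Wl R \<Delta> lam m \<I> \<tau> \<and> y \<in> Wl R \<Delta> lam m \<I> \<tau>
      \<and> snd y \<subseteq> snd x
      \<and> coset_le R \<Delta> (min_pre R \<Delta> (lamsum lam m) (lamI \<I> lam (snd y)) (fst y))
                     (max_pre R \<Delta> (lamsum lam m) (lamI \<I> lam (snd x)) (fst x))}"

definition wl_ge :: "'a::euclidean_space set \<Rightarrow> 'a set \<Rightarrow> (nat \<Rightarrow> 'a) \<Rightarrow> nat \<Rightarrow> nat set set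
     \<Rightarrow> ('a \<Rightarrow> 'a) set \<Rightarrow> 'a elt \<Rightarrow> 'a elt \<Rightarrow> bool" where
  "wl_ge R \<Delta> lam m \<I> \<tau> x y \<longleftrightarrow> (x, y) \<in> (wl_rel R \<Delta> lam m \<I> \<tau>)\<^sup>+"

definition Wtau :: "'a::euclidean_space set \<Rightarrow> 'a set \<Rightarrow> (nat \<Rightarrow> 'a) \<Rightarrow> nat
     \<Rightarrow> ('a \<Rightarrow> 'a) set \<Rightarrow> ('a \<Rightarrow> 'a) set set" where
  "Wtau R \<Delta> lam m \<tau> = {\<theta>\<in>cosets R (lamsum lam m). coset_le R \<Delta> \<theta> \<tau>}"

definition prod_ge :: "'a::euclidean_space set \<Rightarrow> 'a set \<Rightarrow> 'a elt \<Rightarrow> 'a elt \<Rightarrow> bool" where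
  "prod_ge R \<Delta> x y \<longleftrightarrow> coset_le R \<Delta> (fst y) (fst x) \<and> snd y \<subseteq> snd x"

definition is_lift :: "'a::euclidean_space set \<Rightarrow> 'a set \<Rightarrow> (nat \<Rightarrow> 'a) \<Rightarrow> nat \<Rightarrow> nat set set
     \<Rightarrow> ('a \<Rightarrow> 'a) set \<Rightarrow> 'a elt set \<Rightarrow> 'a elt set \<Rightarrow> bool" where
  "is_lift R \<Delta> lam m \<I> \<tau> C L \<longleftrightarrow> (\<exists>f. (\<forall>x\<in>C. fst (f x) \<in> Wtau R \<Delta> lam m \<tau> \<and> snd (f x) = snd x
        \<and> snd x \<in> \<I> \<and> proj R \<Delta> (lamI \<I> lam (snd x)) (fst (f x)) = fst x)
      \<and> L = f ` C \<and> (\<forall>a\<in>L. \<forall>b\<in>L. prod_ge R \<Delta> a b \<or> prod_ge R \<Delta> b a))"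

definition std_chain :: "'a::euclidean_space set \<Rightarrow> 'a set \<Rightarrow> (nat \<Rightarrow> 'a) \<Rightarrow> nat \<Rightarrow> nat set set
     \<Rightarrow> ('a \<Rightarrow> 'a) set \<Rightarrow> 'a elt set \<Rightarrow> bool" where
  "std_chain R \<Delta> lam m \<I> \<tau> C \<longleftrightarrow> C \<subseteq> Wl R \<Delta> lam m \<I> \<tau>
     \<and> (\<forall>x\<in>C. \<forall>y\<in>C. wl_ge R \<Delta> lam m \<I> \<tau> x y \<or> wl_ge R \<Delta> lam m \<I> \<tau> y x)
     \<and> (\<exists>L. is_lift R \<Delta> lam m \<I> \<tau> C L)"

definition max_std_chain :: "'a::euclidean_space set \<Rightarrow> 'a set \<Rightarrow> (nat \<Rightarrow> 'a) \<Rightarrow> nat \<Rightarrow> nat set set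
     \<Rightarrow> ('a \<Rightarrow> 'a) set \<Rightarrow> 'a elt set \<Rightarrow> bool" where
  "max_std_chain R \<Delta> lam m \<I> \<tau> C \<longleftrightarrow> std_chain R \<Delta> lam m \<I> \<tau> C
     \<and> (\<forall>C'. std_chain R \<Delta> lam m \<I> \<tau> C' \<and> C \<subseteq> C' \<longrightarrow> C' = C)"

definition Dset :: "'a::euclidean_space set \<Rightarrow> 'a set \<Rightarrow> (nat \<Rightarrow> 'a) \<Rightarrow> nat \<Rightarrow> nat set set
     \<Rightarrow> ('a \<Rightarrow> 'a) set \<Rightarrow> 'a elt set" where
  "Dset R \<Delta> lam m \<I> \<tau> = \<Union>{L. \<exists>C. max_std_chain R \<Delta> lam m \<I> \<tau> C \<and> is_lift R \<Delta> lam m \<I> \<tau> C L}"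

definition D_ge :: "'a::euclidean_space set \<Rightarrow> 'a set \<Rightarrow> (nat \<Rightarrow> 'a) \<Rightarrow> nat \<Rightarrow> nat set set
     \<Rightarrow> ('a \<Rightarrow> 'a) set \<Rightarrow> 'a elt \<Rightarrow> 'a elt \<Rightarrow> bool" where
  "D_ge R \<Delta> lam m \<I> \<tau> x y \<longleftrightarrow> prod_ge R \<Delta> x y \<and>
     (\<exists>C L. max_std_chain R \<Delta> lam m \<I> \<tau> C \<and> is_lift R \<Delta> lam m \<I> \<tau> C L \<and> x \<in> L \<and> y \<in> L)"

definition pD :: "'a::euclidean_space set \<Rightarrow> 'a set \<Rightarrow> (nat \<Rightarrow> 'a) \<Rightarrow> nat set set \<Rightarrow> 'a elt \<Rightarrow> 'a elt" where
  "pD R \<Delta> lam \<I> x = (proj R \<Delta> (lamI \<I> lam (snd x)) (fst x), snd x)"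

definition tau_standard :: "'a::euclidean_space set \<Rightarrow> 'a set \<Rightarrow> (nat \<Rightarrow> 'a) \<Rightarrow> nat \<Rightarrow> nat set set
     \<Rightarrow> ('a \<Rightarrow> 'a) set \<Rightarrow> bool" where
  "tau_standard R \<Delta> lam m \<I> \<tau> \<longleftrightarrow>
     bij_betw (pD R \<Delta> lam \<I>) (Dset R \<Delta> lam m \<I> \<tau>) (Wl R \<Delta> lam m \<I> \<tau>)
     \<and> (\<forall>x\<in>Dset R \<Delta> lam m \<I> \<tau>. \<forall>y\<in>Dset R \<Delta> lam m \<I> \<tau>.
          D_ge R \<Delta> lam m \<I> \<tau> x y \<longleftrightarrow> wl_ge R \<Delta> lam m \<I> \<tau> (pD R \<Delta> lam \<I> x) (pD R \<Delta> lam \<I> y))"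

section \<open>Bond numbers and LS-paths\<close>

text \<open>Bond number b_{x,y} for a covering x > y in D.\<close>
definition bond :: "'a::euclidean_space set \<Rightarrow> 'a set \<Rightarrow> (nat \<Rightarrow> 'a) \<Rightarrow> nat set set
     \<Rightarrow> 'a elt \<Rightarrow> 'a elt \<Rightarrow> real" where
  "bond R \<Delta> lam \<I> x y = (if snd x = snd y then
      \<bar>pairing (minB R \<Delta> (fst y) (lamI \<I> lam (snd x)))
        (THE \<beta>. \<beta> \<in> pos_roots R \<Delta> \<and> sref \<beta> \<circ> minB R \<Delta> (fst y) = minB R \<Delta> (fst x))\<bar>
     else 1)"

definition D_maxchain :: "'a::euclidean_space set \<Rightarrow> 'a set \<Rightarrow> (nat \<Rightarrow> 'a) \<Rightarrow> nat \<Rightarrow> nat set set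
     \<Rightarrow> ('a \<Rightarrow> 'a) set \<Rightarrow> 'a elt list \<Rightarrow> bool" where
  "D_maxchain R \<Delta> lam m \<I> \<tau> ps \<longleftrightarrow> ps \<noteq> [] \<and> distinct ps \<and> set ps \<subseteq> Dset R \<Delta> lam m \<I> \<tau>
     \<and> (\<forall>i. 0 < i \<and> i < length ps \<longrightarrow> D_ge R \<Delta> lam m \<I> \<tau> (ps ! i) (ps ! (i - 1)))
     \<and> (\<forall>a\<in>set ps. \<forall>b\<in>set ps. D_ge R \<Delta> lam m \<I> \<tau> a b \<or> D_ge R \<Delta> lam m \<I> \<tau> b a)
     \<and> (\<forall>C. set ps \<subseteq> C \<and> C \<subseteq> Dset R \<Delta> lam m \<I> \<tau>
           \<and> (\<forall>a\<in>C. \<forall>b\<in>C. D_ge R \<Delta> lam m \<I> \<tau> a b \<or> D_ge R \<Delta> lam m \<I> \<tau> b a) \<longrightarrow> C = set ps)"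

text \<open>Elements of the Q-vector space with basis (e_p)_{p in D} are functions 'a elt => rat.\<close>
definition LS_ch :: "'a::euclidean_space set \<Rightarrow> 'a set \<Rightarrow> (nat \<Rightarrow> 'a) \<Rightarrow> nat set set
     \<Rightarrow> 'a elt list \<Rightarrow> ('a elt \<Rightarrow> rat) set" where
  "LS_ch R \<Delta> lam \<I> ps = {x. (\<forall>p. p \<notin> set ps \<longrightarrow> x p = 0)
      \<and> (\<forall>i\<in>{1..<length ps}. bond R \<Delta> lam \<I> (ps ! i) (ps ! (i - 1))
              * real_of_rat (\<Sum>j\<in>{i..<length ps}. x (ps ! j)) \<in> \<int>)
      \<and> (\<Sum>j<length ps. x (ps ! j)) \<in> \<int>}"

definition LSplus :: "'a::euclidean_space set \<Rightarrow> 'a set \<Rightarrow> (nat \<Rightarrow> 'a) \<Rightarrow> nat \<Rightarrow> nat set set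
     \<Rightarrow> ('a \<Rightarrow> 'a) set \<Rightarrow> ('a elt \<Rightarrow> rat) set" where
  "LSplus R \<Delta> lam m \<I> \<tau> = {x. \<exists>ps. D_maxchain R \<Delta> lam m \<I> \<tau> ps \<and> x \<in> LS_ch R \<Delta> lam \<I> ps
       \<and> (\<forall>p. x p \<ge> 0)}"

definition degree :: "'a::euclidean_space set \<Rightarrow> 'a set \<Rightarrow> (nat \<Rightarrow> 'a) \<Rightarrow> nat \<Rightarrow> nat set set
     \<Rightarrow> ('a \<Rightarrow> 'a) set \<Rightarrow> ('a elt \<Rightarrow> rat) \<Rightarrow> nat \<Rightarrow> rat" where
  "degree R \<Delta> lam m \<I> \<tau> x k = (\<Sum>p\<in>Dset R \<Delta> lam m \<I> \<tau>. x p * of_nat (eI \<I> (snd p) k))"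

definition LS_deg :: "'a::euclidean_space set \<Rightarrow> 'a set \<Rightarrow> (nat \<Rightarrow> 'a) \<Rightarrow> nat \<Rightarrow> nat set set
     \<Rightarrow> ('a \<Rightarrow> 'a) set \<Rightarrow> (nat \<Rightarrow> nat) \<Rightarrow> ('a elt \<Rightarrow> rat) set" where
  "LS_deg R \<Delta> lam m \<I> \<tau> d = {x\<in>LSplus R \<Delta> lam m \<I> \<tau>. \<forall>k. degree R \<Delta> lam m \<I> \<tau> x k = of_nat (d k)}"

definition LS_layer :: "'a::euclidean_space set \<Rightarrow> 'a set \<Rightarrow> (nat \<Rightarrow> 'a) \<Rightarrow> nat \<Rightarrow> nat set set
     \<Rightarrow> ('a \<Rightarrow> 'a) set \<Rightarrow> nat set \<Rightarrow> nat \<Rightarrow> ('a elt \<Rightarrow> rat) set" where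
  "LS_layer R \<Delta> lam m \<I> \<tau> I d = {x\<in>LS_deg R \<Delta> lam m \<I> \<tau> (\<lambda>k. d * eI \<I> I k).
       \<forall>p. x p \<noteq> 0 \<longrightarrow> p \<in> Dset R \<Delta> lam m \<I> \<tau> \<and> snd p = I}"

end

theory Submission
  imports Defs
begin

lemma sref_linear: "linear (sref a)"
  unfolding sref_def pairing_def
  by (rule linearI) (auto simp: inner_add_left inner_scaleR_left algebra_simps add_divide_distrib scaleR_add_left)

lemma weyl_lin:
  assumes "root_system R" "w \<in> weyl R"
  shows "linear w \<and> w ` R \<subseteq> R"
  using assms(2)
proof induction
  case weyl_id then show ?case by (simp add: id_def linear_ident)
next
  case (weyl_step w a)
  then show ?case using assms(1) sref_linear[of a]
  proof -
    have "linear (sref a \<circ> w)" using weyl_step sref_linear[of a] linear_compose by blast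
    moreover have "(sref a \<circ> w) ` R \<subseteq> R" using weyl_step assms(1) by (auto simp: root_system_def)
    ultimately show ?thesis by blast
  qed
qed

lemma finite_weyl:
  assumes "root_system R" shows "finite (weyl R)"
proof -
  have fR: "finite R" and sp: "span R = UNIV" using assms by (auto simp: root_system_def)
  have inj: "inj_on (\<lambda>w. restrict w R) (weyl R)"
  proof (rule inj_onI)
    fix v w assume v: "v \<in> weyl R" and w: "w \<in> weyl R" and eq: "restrict v R = restrict w R"
    have lv: "linear v" and lw: "linear w" using weyl_lin[OF assms v] weyl_lin[OF assms w] by auto
    have "\<And>x. x \<in> R \<Longrightarrow> v x = w x" using eq by (metis restrict_apply')
    then have "\<And>x. v x = w x" using linear_eq_on_span[OF lv lw, of R] sp by auto
    then show "v = w" by auto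
  qed
  have "(\<lambda>w. restrict w R) ` weyl R \<subseteq> (\<Pi>\<^sub>E i\<in>R. R)"
    using weyl_lin[OF assms] by (auto simp: PiE_iff) blast
  moreover have "finite (\<Pi>\<^sub>E i\<in>R. R)" using fR by (intro finite_PiE) auto
  ultimately have "finite ((\<lambda>w. restrict w R) ` weyl R)" by (rule finite_subset)
  then show ?thesis using inj finite_image_iff by blast
qed

lemma Dset_sub: "Dset R \<Delta> lam m \<I> \<tau> \<subseteq> Pow (weyl R) \<times> \<I>"
proof
  fix p assume "p \<in> Dset R \<Delta> lam m \<I> \<tau>"
  then obtain C L where "is_lift R \<Delta> lam m \<I> \<tau> C L" "p \<in> L" unfolding Dset_def by auto
  then obtain f c where f: "\<forall>x\<in>C. fst (f x) \<in> Wtau R \<Delta> lam m \<tau> \<and> snd (f x) = snd x \<and> snd x \<in> \<I>"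
    and "c \<in> C" "p = f c" unfolding is_lift_def by blast
  then have "fst p \<in> Wtau R \<Delta> lam m \<tau>" "snd p \<in> \<I>" by auto
  then show "p \<in> Pow (weyl R) \<times> \<I>"
    by (cases p) (auto simp: Wtau_def cosets_def coset_def)
qed

lemma ul_sub: "ul \<I> J \<subseteq> J"
  unfolding ul_def covers_def by auto

lemma ul_ne:
  assumes "finite \<I>" "J \<in> \<I>" "J \<noteq> {}" "finite J"
  shows "ul \<I> J \<noteq> {}"
proof (cases "minimal_in \<I> J")
  case True then show ?thesis using assms by (simp add: ul_def)
next
  case False
  define X where "X = {K\<in>\<I>. K \<subset> J}"
  have fX: "finite X" using assms(1) by (simp add: X_def)
  have neX: "X \<noteq> {}" using False by (auto simp: X_def minimal_in_def)
  define c where "c = Max (card ` X)"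
  have "c \<in> card ` X" unfolding c_def using fX neX by (intro Max_in) auto
  then obtain K0 where K0: "K0 \<in> X" "card K0 = c" by auto
  have mx: "\<And>K. K \<in> X \<Longrightarrow> card K \<le> card K0" using K0 fX unfolding c_def by auto
  have cov: "covers \<I> J K0"
    unfolding covers_def
  proof (intro conjI)
    show "K0 \<in> \<I>" "K0 \<subset> J" using K0 by (auto simp: X_def)
    show "\<not> (\<exists>L\<in>\<I>. K0 \<subset> L \<and> L \<subset> J)"
    proof
      assume "\<exists>L\<in>\<I>. K0 \<subset> L \<and> L \<subset> J"
      then obtain L where L: "L \<in> \<I>" "K0 \<subset> L" "L \<subset> J" by blast
      then have "L \<in> X" by (auto simp: X_def)
      moreover have "card K0 < card L" using L assms(4) by (meson finite_subset psubset_card_mono psubset_imp_subset)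
      ultimately show False using mx by fastforce
    qed
  qed
  have "J - K0 \<subseteq> ul \<I> J" using False cov by (auto simp: ul_def)
  moreover have "J - K0 \<noteq> {}" using K0 by (auto simp: X_def)
  ultimately show ?thesis by blast
qed

definition maxch :: "nat set set \<Rightarrow> nat set set \<Rightarrow> bool" where
  "maxch \<I> C \<longleftrightarrow> C \<subseteq> \<I> \<and> subset_chain C \<and> (\<forall>C'. C \<subseteq> C' \<and> C' \<subseteq> \<I> \<and> subset_chain C' \<longrightarrow> C' = C)"

lemma maxchain_ext:
  assumes "finite \<I>" "C \<subseteq> \<I>" "subset_chain C"
  shows "\<exists>C'. C \<subseteq> C' \<and> maxch \<I> C'"
proof -
  define X where "X = {C'. C \<subseteq> C' \<and> C' \<subseteq> \<I> \<and> subset_chain C'}"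
  have fX: "finite X" using assms(1) unfolding X_def by (rule rev_finite_subset[OF finite_Pow_iff[THEN iffD2]]) auto
  have neX: "C \<in> X" using assms by (auto simp: X_def)
  define c where "c = Max (card ` X)"
  have "c \<in> card ` X" unfolding c_def using fX neX by (intro Max_in) auto
  then obtain C0 where C0: "C0 \<in> X" "card C0 = c" by auto
  have mx: "\<And>K. K \<in> X \<Longrightarrow> card K \<le> card C0" using C0 fX unfolding c_def by auto
  have "maxch \<I> C0" unfolding maxch_def
  proof (intro conjI allI impI)
    show "C0 \<subseteq> \<I>" "subset_chain C0" using C0 by (auto simp: X_def)
    fix C' assume a: "C0 \<subseteq> C' \<and> C' \<subseteq> \<I> \<and> subset_chain C'"
    then have "C' \<in> X" using C0 by (auto simp: X_def)
    then have "card C' \<le> card C0" by (rule mx)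
    moreover have "finite C'" using a assms(1) finite_subset by blast
    ultimately show "C' = C0" using a by (metis card_mono card_subset_eq le_antisym)
  qed
  then show ?thesis using C0 by (auto simp: X_def)
qed

locale idxsys =
  fixes m :: nat and \<I> :: "nat set set"
  assumes idx: "index_system m \<I>" and cs: "cond_star \<I>"
begin

lemma idx_mem: "J \<in> \<I> \<Longrightarrow> J \<noteq> {} \<and> J \<subseteq> {1..m}"
  using idx by (auto simp: index_system_def)

lemma idx_fin: "finite \<I>"
proof -
  have "\<I> \<subseteq> Pow {1..m}" using idx_mem by auto
  then show ?thesis by (rule finite_subset) auto
qed

lemma mem_fin: "J \<in> \<I> \<Longrightarrow> finite J"
  using idx_mem finite_subset by blast

lemma ul_ne': "J \<in> \<I> \<Longrightarrow> ul \<I> J \<noteq> {}"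
  using ul_ne[OF idx_fin] idx_mem mem_fin by blast

lemma maxch_card: "maxch \<I> C \<Longrightarrow> card C = m"
  using idx unfolding index_system_def maxch_def by blast

lemma maxch_cards:
  assumes "maxch \<I> C" "n \<in> {1..m}"
  shows "\<exists>A\<in>C. card A = n"
proof -
  have CI: "C \<subseteq> \<I>" and ch: "subset_chain C" using assms(1) by (auto simp: maxch_def)
  have fC: "finite C" using CI idx_fin finite_subset by blast
  have inj: "inj_on card C"
  proof (rule inj_onI)
    fix A B assume "A \<in> C" "B \<in> C" "card A = card B"
    then show "A = B" using ch CI mem_fin unfolding subset_chain_def
      by (metis card_subset_eq subsetD)
  qed
  have sub: "card ` C \<subseteq> {1..m}"
  proof
    fix n assume "n \<in> card ` C"
    then obtain A where A: "A \<in> C" "n = card A" by auto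
    then have "A \<noteq> {}" "A \<subseteq> {1..m}" "finite A" using CI idx_mem mem_fin by auto
    then show "n \<in> {1..m}" using A card_mono[of "{1..m}" A] by (auto simp: card_gt_0_iff Suc_le_eq)
  qed
  have "card (card ` C) = card {1..m}" using card_image[OF inj] maxch_card[OF assms(1)] by simp
  then have e: "card ` C = {1..m}" using sub by (simp add: card_subset_eq)
  have "n \<in> card ` C" by (subst e) (rule assms(2))
  then show ?thesis by blast
qed

lemma top_in:
  assumes "m \<ge> 1" shows "{1..m} \<in> \<I>"
proof -
  have "\<I> \<noteq> {}"
  proof
    assume "\<I> = {}"
    then have "maxch \<I> {}" by (auto simp: maxch_def subset_chain_def)
    then show False using maxch_card assms by fastforce
  qed
  then obtain J where J: "J \<in> \<I>" by blast
  obtain C where C: "{J} \<subseteq> C" "maxch \<I> C"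
    using maxchain_ext[OF idx_fin, of "{J}"] J by (auto simp: subset_chain_def)
  obtain A where A: "A \<in> C" "card A = m" using maxch_cards[OF C(2), of m] assms by auto
  have "A \<in> \<I>" using A C by (auto simp: maxch_def)
  then have "A \<subseteq> {1..m}" using idx_mem by auto
  then have "A = {1..m}" using A by (simp add: card_subset_eq)
  then show ?thesis using \<open>A \<in> \<I>\<close> by simp
qed

lemma cover_single:
  assumes "covers \<I> J K" "J \<in> \<I>"
  shows "\<exists>j. J - K = {j}"
proof -
  have K: "K \<in> \<I>" "K \<subset> J" and nb: "\<not> (\<exists>L\<in>\<I>. K \<subset> L \<and> L \<subset> J)"
    using assms(1) by (auto simp: covers_def)
  have fJ: "finite J" using assms(2) mem_fin by blast
  have lt: "card K < card J" using K fJ by (simp add: psubset_card_mono)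
  obtain C where C: "{K, J} \<subseteq> C" "maxch \<I> C"
    using maxchain_ext[OF idx_fin, of "{K,J}"] K assms(2) by (auto simp: subset_chain_def)
  have ch: "subset_chain C" and CI: "C \<subseteq> \<I>" using C by (auto simp: maxch_def)
  have "card J = card K + 1"
  proof (rule ccontr)
    assume ne: "card J \<noteq> card K + 1"
    have "card J \<le> m" using idx_mem[OF assms(2)] card_mono[of "{1..m}" J] by simp
    then have "card K + 1 \<in> {1..m}" using ne lt by auto
    then obtain A where A: "A \<in> C" "card A = card K + 1" using maxch_cards[OF C(2)] by blast
    have fA: "finite A" using A CI mem_fin by blast
    have "A \<subseteq> K \<or> K \<subseteq> A" using ch A C unfolding subset_chain_def by blast
    moreover have "\<not> A \<subseteq> K" using A K fJ card_mono[of K A] finite_subset[of K J] by auto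
    ultimately have KA: "K \<subset> A" using A by auto
    have "A \<subseteq> J \<or> J \<subseteq> A" using ch A C unfolding subset_chain_def by blast
    moreover have "\<not> J \<subseteq> A" using A ne lt fA by (metis card_mono Suc_eq_plus1 le_antisym Suc_leI)
    ultimately have "A \<subset> J" by auto
    then show False using nb KA A CI by blast
  qed
  moreover have "card (J - K) = card J - card K" using K fJ card_Diff_subset[of K J] finite_subset[of K J] by auto
  ultimately have "card (J - K) = 1" by simp
  then show ?thesis by (simp add: card_1_singleton_iff)
qed

lemma minimal_card:
  assumes "J \<in> \<I>" "minimal_in \<I> J"
  shows "card J = 1"
proof -
  have J: "J \<noteq> {}" "J \<subseteq> {1..m}" "finite J" using idx_mem[OF assms(1)] mem_fin[OF assms(1)] by auto
  then have "m \<ge> 1" by auto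
  obtain C where C: "{J} \<subseteq> C" "maxch \<I> C"
    using maxchain_ext[OF idx_fin, of "{J}"] assms(1) by (auto simp: subset_chain_def)
  obtain A where A: "A \<in> C" "card A = 1" using maxch_cards[OF C(2), of 1] \<open>m \<ge> 1\<close> by auto
  have AI: "A \<in> \<I>" using A C by (auto simp: maxch_def)
  have "A \<subseteq> J \<or> J \<subseteq> A" using C A unfolding maxch_def subset_chain_def by blast
  then show ?thesis
  proof
    assume "A \<subseteq> J" then have "A = J" using assms(2) AI unfolding minimal_in_def by blast
    then show ?thesis using A by simp
  next
    assume "J \<subseteq> A" then have "card J \<le> 1" using A card_mono[of A J] by (metis card.infinite zero_neq_one)
    then show ?thesis using J by (simp add: card_gt_0_iff le_antisym Suc_le_eq)
  qed
qed

lemma least_cover: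
  assumes "S \<noteq> {}" "S \<subseteq> {1..m}"
  shows "\<exists>J\<in>\<I>. S \<subseteq> J \<and> ul \<I> J \<subseteq> S"
proof -
  have "m \<ge> 1" using assms by auto
  define X where "X = {J\<in>\<I>. S \<subseteq> J}"
  have fX: "finite X" using idx_fin by (simp add: X_def)
  have neX: "{1..m} \<in> X" using top_in[OF \<open>m \<ge> 1\<close>] assms by (simp add: X_def)
  define c where "c = Min (card ` X)"
  have "c \<in> card ` X" unfolding c_def using fX neX by (intro Min_in) auto
  then obtain J where J: "J \<in> X" "card J = c" by auto
  have mn: "\<And>K. K \<in> X \<Longrightarrow> card J \<le> card K" using J fX unfolding c_def by auto
  have JI: "J \<in> \<I>" and SJ: "S \<subseteq> J" using J by (auto simp: X_def)
  have fJ: "finite J" using mem_fin JI by blast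
  have "ul \<I> J \<subseteq> S"
  proof (cases "minimal_in \<I> J")
    case True
    then have "card J = 1" using minimal_card JI by blast
    then obtain j where "J = {j}" by (auto simp: card_1_singleton_iff)
    then have "S = J" using SJ assms(1) by auto
    then show ?thesis using True by (simp add: ul_def)
  next
    case False
    show ?thesis
    proof
      fix x assume "x \<in> ul \<I> J"
      then obtain K where K: "covers \<I> J K" "x \<in> J - K" using False by (auto simp: ul_def)
      obtain j where j: "J - K = {j}" using cover_single[OF K(1) JI] by blast
      have KI: "K \<in> \<I>" "K \<subset> J" using K(1) by (auto simp: covers_def)
      have "\<not> S \<subseteq> K"
      proof
        assume "S \<subseteq> K"
        then have "K \<in> X" using KI by (simp add: X_def)
        then have "card J \<le> card K" by (rule mn)
        moreover have "card K < card J" using KI fJ by (simp add: psubset_card_mono)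
        ultimately show False by simp
      qed
      then obtain s where "s \<in> S" "s \<notin> K" by blast
      then have "s = j" using SJ j by auto
      moreover have "x = j" using K j by auto
      ultimately show "x \<in> S" using \<open>s \<in> S\<close> by simp
    qed
  qed
  then show ?thesis using JI SJ by blast
qed


lemma eI_le1: "eI \<I> J k \<le> 1" by (simp add: eI_def)

lemma head_props:
  assumes "set (J # Js) \<subseteq> \<I>" "sorted_wrt (\<lambda>A B. B \<subseteq> A) (J # Js)"
  shows "ul \<I> J \<subseteq> {k. (\<Sum>I\<leftarrow>J # Js. eI \<I> I k) \<noteq> 0}"
    and "{k. (\<Sum>I\<leftarrow>J # Js. eI \<I> I k) \<noteq> 0} \<subseteq> J"
proof -
  show "ul \<I> J \<subseteq> {k. (\<Sum>I\<leftarrow>J # Js. eI \<I> I k) \<noteq> 0}" by (auto simp: eI_def)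
  show "{k. (\<Sum>I\<leftarrow>J # Js. eI \<I> I k) \<noteq> 0} \<subseteq> J"
  proof
    fix k assume "k \<in> {k. (\<Sum>I\<leftarrow>J # Js. eI \<I> I k) \<noteq> 0}"
    then obtain J' where J': "J' \<in> set (J # Js)" "eI \<I> J' k \<noteq> 0"
      by (auto simp del: sum_list.Cons simp: sum_list_eq_0_iff)
    then have "k \<in> J'" using ul_sub by (auto simp: eI_def split: if_splits)
    moreover have "J' \<subseteq> J" using J' assms(2) by auto
    ultimately show "k \<in> J" by blast
  qed
qed

lemma uniq:
  "\<And>Is'. set Is \<subseteq> \<I> \<Longrightarrow> sorted_wrt (\<lambda>A B. B \<subseteq> A) Is \<Longrightarrow> set Is' \<subseteq> \<I> \<Longrightarrow>
     sorted_wrt (\<lambda>A B. B \<subseteq> A) Is' \<Longrightarrow>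
     (\<lambda>k. \<Sum>I\<leftarrow>Is. eI \<I> I k) = (\<lambda>k. \<Sum>I\<leftarrow>Is'. eI \<I> I k) \<Longrightarrow> Is = Is'"
proof (induction Is)
  case Nil
  show ?case
  proof (cases Is')
    case (Cons J Js)
    then have "J \<in> \<I>" using Nil by auto
    then obtain k where "k \<in> ul \<I> J" using ul_ne' by blast
    then have "(\<Sum>I\<leftarrow>Is'. eI \<I> I k) \<noteq> 0" using Cons by (simp add: eI_def)
    moreover have "(\<Sum>I\<leftarrow>[]. eI \<I> I k) = (\<Sum>I\<leftarrow>Is'. eI \<I> I k)" using fun_cong[OF Nil(5), of k] .
    ultimately show ?thesis by simp
  qed simp
next
  case (Cons J Js)
  note IH = Cons.IH and P = Cons.prems
  show ?case
  proof (cases Is')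
    case Nil
    have "J \<in> \<I>" using Cons by auto
    then obtain k where "k \<in> ul \<I> J" using ul_ne' by blast
    then have "(\<Sum>I\<leftarrow>J#Js. eI \<I> I k) \<noteq> 0" by (simp add: eI_def)
    moreover have "(\<Sum>I\<leftarrow>J#Js. eI \<I> I k) = (\<Sum>I\<leftarrow>Is'. eI \<I> I k)" using fun_cong[OF P(5), of k] .
    ultimately show ?thesis using Nil by simp
  next
    case (Cons J' Js')
    note Cons2 = this
    define S where "S = {k. (\<Sum>I\<leftarrow>J # Js. eI \<I> I k) \<noteq> 0}"
    have eqf: "(\<lambda>k. \<Sum>I\<leftarrow>J # Js. eI \<I> I k) = (\<lambda>k. \<Sum>I\<leftarrow>J' # Js'. eI \<I> I k)"
      using P(5) unfolding Cons2 .
    have S': "S = {k. (\<Sum>I\<leftarrow>J' # Js'. eI \<I> I k) \<noteq> 0}" unfolding S_def using arg_cong[where f="\<lambda>f. {k. f k \<noteq> 0}", OF eqf] by (simp only:)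
    have h1: "ul \<I> J \<subseteq> S" "S \<subseteq> J" using head_props[OF P(1,2)] unfolding S_def by auto
    have h2: "ul \<I> J' \<subseteq> S" "S \<subseteq> J'" using head_props[of J' Js'] P(3,4) Cons2 unfolding S' by auto
    have JI: "J \<in> \<I>" "J' \<in> \<I>" using P Cons2 by auto
    have "J \<subseteq> J'" using cs JI h1 h2 unfolding cond_star_def by blast
    moreover have "J' \<subseteq> J" using cs JI h1 h2 unfolding cond_star_def by blast
    ultimately have JJ: "J = J'" by blast
    have "(\<lambda>k. \<Sum>I\<leftarrow>Js. eI \<I> I k) = (\<lambda>k. \<Sum>I\<leftarrow>Js'. eI \<I> I k)"
    proof
      fix k
      have "eI \<I> J k + (\<Sum>I\<leftarrow>Js. eI \<I> I k) = eI \<I> J k + (\<Sum>I\<leftarrow>Js'. eI \<I> I k)"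
        using fun_cong[OF eqf, of k] JJ by simp
      then show "(\<Sum>I\<leftarrow>Js. eI \<I> I k) = (\<Sum>I\<leftarrow>Js'. eI \<I> I k)" by simp
    qed
    moreover have "set Js \<subseteq> \<I>" "sorted_wrt (\<lambda>A B. B \<subseteq> A) Js" using P(1,2) by auto
    moreover have "set Js' \<subseteq> \<I>" "sorted_wrt (\<lambda>A B. B \<subseteq> A) Js'" using P(3,4) Cons2 by auto
    ultimately have "Js = Js'" using IH[of Js'] by blast
    then show ?thesis using JJ Cons2 by simp
  qed
qed

lemma exist:
  "(\<forall>k. k \<notin> {1..m} \<longrightarrow> d k = 0) \<Longrightarrow> \<exists>Is. set Is \<subseteq> \<I> \<and> sorted_wrt (\<lambda>A B. B \<subseteq> A) Is
     \<and> (\<lambda>k. \<Sum>I\<leftarrow>Is. eI \<I> I k) = d \<and> (\<forall>J\<in>set Is. \<forall>I'\<in>\<I>. {k. d k \<noteq> 0} \<subseteq> I' \<longrightarrow> J \<subseteq> I')"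
proof (induction "sum d {1..m}" arbitrary: d rule: less_induct)
  case less
  show ?case
  proof (cases "\<forall>k. d k = 0")
    case True
    then show ?thesis by (intro exI[of _ "[]"]) auto
  next
    case False
    define S where "S = {k. d k \<noteq> 0}"
    have S: "S \<noteq> {}" "S \<subseteq> {1..m}" using False less.prems by (auto simp: S_def)
    obtain J where J: "J \<in> \<I>" "S \<subseteq> J" "ul \<I> J \<subseteq> S" using least_cover[OF S] by blast
    have least: "\<And>I'. I' \<in> \<I> \<Longrightarrow> S \<subseteq> I' \<Longrightarrow> J \<subseteq> I'" using cs J unfolding cond_star_def by blast
    define d' where "d' = (\<lambda>k. d k - eI \<I> J k)"
    have le: "\<And>k. eI \<I> J k \<le> d k" using J(3) by (auto simp: eI_def S_def)
    have d'0: "\<forall>k. k \<notin> {1..m} \<longrightarrow> d' k = 0" using less.prems by (simp add: d'_def)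
    obtain k0 where k0: "k0 \<in> ul \<I> J" using ul_ne' J(1) by blast
    have k0m: "k0 \<in> {1..m}" using k0 J(3) S(2) by auto
    have "sum d' {1..m} < sum d {1..m}"
    proof (rule sum_strict_mono_ex1)
      show "finite {1..m}" by simp
      show "\<forall>x\<in>{1..m}. d' x \<le> d x" by (simp add: d'_def)
      show "\<exists>a\<in>{1..m}. d' a < d a" using k0 k0m le[of k0] by (intro bexI[of _ k0]) (auto simp: d'_def eI_def)
    qed
    then obtain Is where Is: "set Is \<subseteq> \<I>" "sorted_wrt (\<lambda>A B. B \<subseteq> A) Is"
       "(\<lambda>k. \<Sum>I\<leftarrow>Is. eI \<I> I k) = d'" "\<forall>J\<in>set Is. \<forall>I'\<in>\<I>. {k. d' k \<noteq> 0} \<subseteq> I' \<longrightarrow> J \<subseteq> I'"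
      using less.hyps[OF _ d'0] by blast
    have sd': "{k. d' k \<noteq> 0} \<subseteq> S" by (auto simp: d'_def S_def)
    have sub: "\<forall>J'\<in>set Is. J' \<subseteq> J" using Is(4) J sd' by blast
    show ?thesis
    proof (intro exI[of _ "J # Is"] conjI)
      show "set (J # Is) \<subseteq> \<I>" using Is J by auto
      show "sorted_wrt (\<lambda>A B. B \<subseteq> A) (J # Is)" using Is sub by auto
      show "(\<lambda>k. \<Sum>I\<leftarrow>J # Is. eI \<I> I k) = d"
      proof
        fix k show "(\<Sum>I\<leftarrow>J # Is. eI \<I> I k) = d k" using fun_cong[OF Is(3), of k] le[of k] by (simp add: d'_def)
      qed
      show "\<forall>J'\<in>set (J # Is). \<forall>I'\<in>\<I>. {k. d k \<noteq> 0} \<subseteq> I' \<longrightarrow> J' \<subseteq> I'"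
        using least sub unfolding S_def by auto
    qed
  qed
qed

lemma partA: "\<forall>d::nat \<Rightarrow> nat. (\<forall>k. k \<notin> {1..m} \<longrightarrow> d k = 0) \<longrightarrow>
            (\<exists>!Is. set Is \<subseteq> \<I> \<and> sorted_wrt (\<lambda>A B. B \<subseteq> A) Is
                  \<and> (\<lambda>k. \<Sum>I\<leftarrow>Is. eI \<I> I k) = d)"
proof (intro allI impI)
  fix d :: "nat \<Rightarrow> nat" assume asm: "\<forall>k. k \<notin> {1..m} \<longrightarrow> d k = 0"
  obtain Is where "set Is \<subseteq> \<I> \<and> sorted_wrt (\<lambda>A B. B \<subseteq> A) Is
     \<and> (\<lambda>k. \<Sum>I\<leftarrow>Is. eI \<I> I k) = d \<and> (\<forall>J\<in>set Is. \<forall>I'\<in>\<I>. {k. d k \<noteq> 0} \<subseteq> I' \<longrightarrow> J \<subseteq> I')"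
    using exist[OF asm] by (rule exE)
  note IsC = this
  have Is1: "set Is \<subseteq> \<I>" by (rule IsC[THEN conjunct1])
  have Is2: "sorted_wrt (\<lambda>A B. B \<subseteq> A) Is" by (rule IsC[THEN conjunct2, THEN conjunct1])
  have Is3: "(\<lambda>k. \<Sum>I\<leftarrow>Is. eI \<I> I k) = d" by (rule IsC[THEN conjunct2, THEN conjunct2, THEN conjunct1])
  show "\<exists>!Is. set Is \<subseteq> \<I> \<and> sorted_wrt (\<lambda>A B. B \<subseteq> A) Is \<and> (\<lambda>k. \<Sum>I\<leftarrow>Is. eI \<I> I k) = d"
  proof (rule ex1I[of _ Is])
    show "set Is \<subseteq> \<I> \<and> sorted_wrt (\<lambda>A B. B \<subseteq> A) Is \<and> (\<lambda>k. \<Sum>I\<leftarrow>Is. eI \<I> I k) = d"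
      by (intro conjI Is1 Is2 Is3)
    fix Is' assume h: "set Is' \<subseteq> \<I> \<and> sorted_wrt (\<lambda>A B. B \<subseteq> A) Is' \<and> (\<lambda>k. \<Sum>I\<leftarrow>Is'. eI \<I> I k) = d"
    have h1: "set Is' \<subseteq> \<I>" by (rule h[THEN conjunct1])
    have h2: "sorted_wrt (\<lambda>A B. B \<subseteq> A) Is'" by (rule h[THEN conjunct2, THEN conjunct1])
    have h3: "(\<lambda>k. \<Sum>I\<leftarrow>Is'. eI \<I> I k) = d" by (rule h[THEN conjunct2, THEN conjunct2])
    have h4: "(\<lambda>k. \<Sum>I\<leftarrow>Is'. eI \<I> I k) = (\<lambda>k. \<Sum>I\<leftarrow>Is. eI \<I> I k)"
      by (rule trans[OF h3 Is3[symmetric]])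
    show "Is' = Is" by (rule uniq[OF h1 h2 Is1 Is2 h4])
  qed
qed

lemma partB_support:
  fixes R \<Delta> :: "'a::euclidean_space set" and lam :: "nat \<Rightarrow> 'a" and \<tau> :: "('a \<Rightarrow> 'a) set"
    and x :: "'a elt \<Rightarrow> rat" and d :: nat
  assumes RS: "root_system R" and I0: "I0 \<in> \<I>"
    and x: "x \<in> LS_deg R \<Delta> lam m \<I> \<tau> (\<lambda>k. d * eI \<I> I0 k)"
  shows "\<forall>p. x p \<noteq> 0 \<longrightarrow> p \<in> Dset R \<Delta> lam m \<I> \<tau> \<and> snd p = I0"
proof -
  define D where "D = Dset R \<Delta> lam m \<I> \<tau>"
  have fD: "finite D" unfolding D_def
    by (rule finite_subset[OF Dset_sub]) (use finite_weyl[OF RS] idx_fin in auto)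
  have DI: "\<And>p. p \<in> D \<Longrightarrow> snd p \<in> \<I>" using Dset_sub unfolding D_def by fastforce
  obtain ps where ps: "D_maxchain R \<Delta> lam m \<I> \<tau> ps" "x \<in> LS_ch R \<Delta> lam \<I> ps" and nn: "\<forall>p. x p \<ge> 0"
    using x unfolding LS_deg_def LSplus_def by blast
  have supp: "\<And>p. x p \<noteq> 0 \<Longrightarrow> p \<in> set ps" using ps(2) unfolding LS_ch_def by blast
  have psD: "set ps \<subseteq> D" using ps(1) unfolding D_maxchain_def D_def by (elim conjE) assumption
  have tot: "\<forall>a\<in>set ps. \<forall>b\<in>set ps. D_ge R \<Delta> lam m \<I> \<tau> a b \<or> D_ge R \<Delta> lam m \<I> \<tau> b a"
    using ps(1) unfolding D_maxchain_def by (elim conjE) assumption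
  have Dge: "\<And>a b. D_ge R \<Delta> lam m \<I> \<tau> a b \<Longrightarrow> snd b \<subseteq> snd a"
    by (simp add: D_ge_def prod_ge_def)
  have comp: "\<And>p q. p \<in> set ps \<Longrightarrow> q \<in> set ps \<Longrightarrow> snd p \<subseteq> snd q \<or> snd q \<subseteq> snd p"
    using tot Dge by blast
  have deg: "\<And>k. (\<Sum>p\<in>D. x p * of_nat (eI \<I> (snd p) k)) = of_nat d * of_nat (eI \<I> I0 k)"
    using x unfolding LS_deg_def degree_def D_def by simp
  show ?thesis
  proof (rule ccontr)
    assume "\<not> ?thesis"
    then obtain p1 where p1a: "x p1 \<noteq> 0" "p1 \<notin> Dset R \<Delta> lam m \<I> \<tau> \<or> snd p1 \<noteq> I0" by blast
    then have p1: "x p1 \<noteq> 0" "snd p1 \<noteq> I0" using supp[OF p1a(1)] psD unfolding D_def by auto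
    define T where "T = {p\<in>D. x p \<noteq> 0 \<and> snd p \<noteq> I0}"
    have fT: "finite T" using fD by (simp add: T_def)
    have p1T: "p1 \<in> T" using p1 supp[OF p1(1)] psD by (auto simp: T_def)
    have Tps: "T \<subseteq> set ps" using supp by (auto simp: T_def)
    define c where "c = Max ((\<lambda>p. card (snd p)) ` T)"
    have "c \<in> (\<lambda>p. card (snd p)) ` T" unfolding c_def using fT p1T by (intro Max_in) auto
    then obtain p0 where p0: "p0 \<in> T" "card (snd p0) = c" by auto
    have p0I: "snd p0 \<in> \<I>" using p0 DI by (auto simp: T_def)
    have below: "\<And>p. p \<in> T \<Longrightarrow> snd p \<subseteq> snd p0"
    proof -
      fix p assume pT: "p \<in> T"
      have "card (snd p) \<le> card (snd p0)" using pT fT p0 unfolding c_def by auto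
      moreover have "finite (snd p)" using pT DI mem_fin by (auto simp: T_def)
      moreover have "snd p \<subseteq> snd p0 \<or> snd p0 \<subseteq> snd p" using comp pT p0 Tps by blast
      moreover have "finite (snd p0)" using p0I mem_fin by blast
      ultimately show "snd p \<subseteq> snd p0"
      proof (elim disjE)
        assume a: "snd p0 \<subseteq> snd p" "card (snd p) \<le> card (snd p0)" "finite (snd p)"
        then have "card (snd p0) = card (snd p)" using card_mono[of "snd p" "snd p0"] by simp
        then have "snd p0 = snd p" using card_subset_eq[of "snd p" "snd p0"] a by simp
        then show ?thesis by simp
      qed
    qed
    have TD: "T \<subseteq> D" by (auto simp: T_def)
    define c0 where "c0 = (\<Sum>p\<in>D - T. x p)"
    define r where "r = (\<lambda>k. \<Sum>p\<in>T. x p * of_nat (eI \<I> (snd p) k))"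
    have rnn: "\<And>k p. p \<in> T \<Longrightarrow> 0 \<le> x p * of_nat (eI \<I> (snd p) k)" using nn by (intro mult_nonneg_nonneg) auto
    have req: "\<And>k. r k = (of_nat d - c0) * of_nat (eI \<I> I0 k)"
    proof -
      fix k
      have "(\<Sum>p\<in>D. x p * of_nat (eI \<I> (snd p) k)) = r k + (\<Sum>p\<in>D - T. x p * of_nat (eI \<I> (snd p) k))"
        unfolding r_def using sum.subset_diff[OF TD fD, of "\<lambda>p. x p * of_nat (eI \<I> (snd p) k)"] by simp
      moreover have "(\<Sum>p\<in>D - T. x p * of_nat (eI \<I> (snd p) k)) = (\<Sum>p\<in>D - T. x p * of_nat (eI \<I> I0 k))"
        by (rule sum.cong) (auto simp: T_def)
      moreover have "(\<Sum>p\<in>D - T. x p * of_nat (eI \<I> I0 k)) = c0 * of_nat (eI \<I> I0 k)"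
        unfolding c0_def by (simp add: sum_distrib_right)
      ultimately show "r k = (of_nat d - c0) * of_nat (eI \<I> I0 k)" using deg[of k] by (simp add: algebra_simps)
    qed
    have xp0a: "x p0 \<noteq> 0" using p0(1) by (simp add: T_def)
    have xp0b: "x p0 \<ge> 0" using nn by blast
    have xp0: "x p0 > 0" by (rule order.not_eq_order_implies_strict[OF xp0a[symmetric] xp0b])
    have rpos: "\<And>k. k \<in> ul \<I> (snd p0) \<Longrightarrow> r k > 0"
    proof -
      fix k assume k: "k \<in> ul \<I> (snd p0)"
      have "x p0 * of_nat (eI \<I> (snd p0) k) \<le> r k" unfolding r_def
        using fT p0(1) rnn by (intro member_le_sum) auto
      then show "r k > 0" using k xp0 by (simp add: eI_def)
    qed
    obtain k0 where k0: "k0 \<in> ul \<I> (snd p0)" using ul_ne' p0I by blast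
    have dpos: "of_nat d - c0 > 0"
    proof -
      have "0 < (of_nat d - c0) * of_nat (eI \<I> I0 k0)" using rpos[OF k0] req[of k0] by simp
      then show ?thesis by (auto simp: eI_def split: if_splits)
    qed
    have A: "ul \<I> (snd p0) \<subseteq> I0"
    proof
      fix k assume k: "k \<in> ul \<I> (snd p0)"
      have "0 < (of_nat d - c0) * of_nat (eI \<I> I0 k)" using rpos[OF k] req[of k] by simp
      then have "k \<in> ul \<I> I0" by (auto simp: eI_def split: if_splits)
      then show "k \<in> I0" using ul_sub by blast
    qed
    have B: "ul \<I> I0 \<subseteq> snd p0"
    proof
      fix k assume k: "k \<in> ul \<I> I0"
      have "r k > 0" using req[of k] dpos k by (simp add: eI_def)
      have "\<exists>p\<in>T. x p * of_nat (eI \<I> (snd p) k) \<noteq> 0"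
      proof (rule ccontr)
        assume "\<not> (\<exists>p\<in>T. x p * of_nat (eI \<I> (snd p) k) \<noteq> 0)"
        then have "r k = 0" unfolding r_def by (intro sum.neutral) blast
        with \<open>r k > 0\<close> show False by simp
      qed
      then obtain p where p: "p \<in> T" "x p * of_nat (eI \<I> (snd p) k) \<noteq> 0" by blast
      then have "k \<in> ul \<I> (snd p)" by (auto simp: eI_def split: if_splits)
      then show "k \<in> snd p0" using below[OF p(1)] ul_sub by blast
    qed
    have "snd p0 \<subseteq> I0" using cs A p0I I0 unfolding cond_star_def by blast
    moreover have "I0 \<subseteq> snd p0" using cs B p0I I0 unfolding cond_star_def by blast
    ultimately show False using p0 by (auto simp: T_def)
  qed
qed

end


theorem mainTheorem16:
  fixes R \<Delta> :: "'a::euclidean_space set"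
    and lam :: "nat \<Rightarrow> 'a" and m :: nat
    and \<I> :: "nat set set" and \<tau> :: "('a \<Rightarrow> 'a) set"
  assumes "root_system R" and "irreducible_rs R" and "is_base R \<Delta>"
    and "\<forall>i\<in>{1..m}. dominant R \<Delta> (lam i)"
    and "\<tau> \<in> cosets R (lamsum lam m)"
    and "index_system m \<I>" and "cond_star \<I>"
    and "tau_standard R \<Delta> lam m \<I> \<tau>"
  shows "(\<forall>d::nat \<Rightarrow> nat. (\<forall>k. k \<notin> {1..m} \<longrightarrow> d k = 0) \<longrightarrow>
            (\<exists>!Is. set Is \<subseteq> \<I> \<and> sorted_wrt (\<lambda>A B. B \<subseteq> A) Is
                  \<and> (\<lambda>k. \<Sum>I\<leftarrow>Is. eI \<I> I k) = d))
       \<and> (\<forall>I\<in>\<I>. \<forall>d::nat. LS_layer R \<Delta> lam m \<I> \<tau> I d = LS_deg R \<Delta> lam m \<I> \<tau> (\<lambda>k. d * eI \<I> I k))"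
proof -
  have loc: "idxsys m \<I>" by (rule idxsys.intro[OF assms(6,7)])
  show ?thesis
  proof (rule conjI)
    show "\<forall>d::nat \<Rightarrow> nat. (\<forall>k. k \<notin> {1..m} \<longrightarrow> d k = 0) \<longrightarrow>
            (\<exists>!Is. set Is \<subseteq> \<I> \<and> sorted_wrt (\<lambda>A B. B \<subseteq> A) Is
                  \<and> (\<lambda>k. \<Sum>I\<leftarrow>Is. eI \<I> I k) = d)" by (rule idxsys.partA[OF loc])
    show "\<forall>I\<in>\<I>. \<forall>d::nat. LS_layer R \<Delta> lam m \<I> \<tau> I d = LS_deg R \<Delta> lam m \<I> \<tau> (\<lambda>k. d * eI \<I> I k)"
    proof (intro ballI allI)
      fix I0 d assume I0: "I0 \<in> \<I>"
      show "LS_layer R \<Delta> lam m \<I> \<tau> I0 d = LS_deg R \<Delta> lam m \<I> \<tau> (\<lambda>k. d * eI \<I> I0 k)"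
      proof (rule set_eqI)
        fix x
        show "x \<in> LS_layer R \<Delta> lam m \<I> \<tau> I0 d \<longleftrightarrow> x \<in> LS_deg R \<Delta> lam m \<I> \<tau> (\<lambda>k. d * eI \<I> I0 k)"
        proof
          assume "x \<in> LS_layer R \<Delta> lam m \<I> \<tau> I0 d"
          then show "x \<in> LS_deg R \<Delta> lam m \<I> \<tau> (\<lambda>k. d * eI \<I> I0 k)"
            unfolding LS_layer_def mem_Collect_eq by (rule conjunct1)
        next
          assume h: "x \<in> LS_deg R \<Delta> lam m \<I> \<tau> (\<lambda>k. d * eI \<I> I0 k)"
          have P: "\<forall>p. x p \<noteq> 0 \<longrightarrow> p \<in> Dset R \<Delta> lam m \<I> \<tau> \<and> snd p = I0"
            by (rule idxsys.partB_support[OF loc assms(1) I0 h])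
          show "x \<in> LS_layer R \<Delta> lam m \<I> \<tau> I0 d"
            unfolding LS_layer_def mem_Collect_eq by (rule conjI[OF h P])
        qed
      qed
    qed
  qed
qed

end
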